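(* Let $A$ be a C*-algebra. Then for each subset $S\subseteq A_+$ the sets $\mathrm{Ann}(S)$ and $\mathrm{Ann}(\mathrm{Ann}(S))$ are C*-subalgebras of $A$, and $xAx\subseteq\mathrm{Ann}(S)$, $yAy\subseteq\mathrm{Ann}(\mathrm{Ann}(S))$ for all $x\in\mathrm{Ann}(S)$, $y\in\mathrm{Ann}(\mathrm{Ann}(S))$. Moreover, the set ${}^d(\mathrm{Ann}(\mathrm{Ann}(S)))\cap{}^d(\mathrm{Ann}(S))$ is a Banach space (a norm-closed linear subspace of $A$).
   Context: For $S\subseteq A$, $\mathrm{Ann}(S)=\{a\in A: as+sa=0\ \forall s\in S\}$. For $V\subseteq A$, ${}^dV=\{a\in A: xay+yax=0 \text{ for all } x,y\in V\}$. $A_+$ is the set of positive elements of $A$. *)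

theory Defs
  imports Complex_Main
begin

text \<open>A C*-algebra: a complex Banach algebra (not necessarily unital, as HOL's class
ring has no unit) with complex scalar multiplication scaleC compatible with the
real one, and an involution adj satisfying the C*-identity.\<close>

class cstar_algebra = banach + real_normed_algebra +
  fixes scaleC :: "complex \<Rightarrow> 'a \<Rightarrow> 'a"
    and adj :: "'a \<Rightarrow> 'a"
  assumes scaleC_of_real: "scaleC (complex_of_real r) x = scaleR r x"
    and scaleC_add_right: "scaleC c (x + y) = scaleC c x + scaleC c y"
    and scaleC_add_left: "scaleC (c + d) x = scaleC c x + scaleC d x"
    and scaleC_scaleC: "scaleC c (scaleC d x) = scaleC (c * d) x"
    and scaleC_one: "scaleC 1 x = x"
    and scaleC_mult_left: "scaleC c x * y = scaleC c (x * y)"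
    and scaleC_mult_right: "x * scaleC c y = scaleC c (x * y)"
    and norm_scaleC: "norm (scaleC c x) = cmod c * norm x"
    and adj_add: "adj (x + y) = adj x + adj y"
    and adj_scaleC: "adj (scaleC c x) = scaleC (cnj c) (adj x)"
    and adj_mult: "adj (x * y) = adj y * adj x"
    and adj_adj: "adj (adj x) = x"
    and cstar_identity: "norm (adj x * x) = norm x ^ 2"

context cstar_algebra
begin

text \<open>Spectrum of a computed in the unitization of A. For a nonzero lambda,
a - lambda*1 is invertible in the unitization iff there is c in A with
(a - lambda)(c - 1/lambda) = 1 = (c - 1/lambda)(a - lambda), i.e. the equations below.
0 always lies in the spectrum computed in the unitization.\<close>
definition cspectrum :: "'a \<Rightarrow> complex set" where
  "cspectrum a = {l. l = 0 \<or>
     \<not> (\<exists>c. a * c - scaleC (1 / l) a - scaleC l c = 0 \<and>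
             c * a - scaleC (1 / l) a - scaleC l c = 0)}"

definition positive :: "'a \<Rightarrow> bool" where
  "positive a \<longleftrightarrow> adj a = a \<and> cspectrum a \<subseteq> complex_of_real ` {0..}"

definition Ann :: "'a set \<Rightarrow> 'a set" where
  "Ann S = {a. \<forall>s\<in>S. a * s + s * a = 0}"

definition dAnn :: "'a set \<Rightarrow> 'a set" where
  "dAnn V = {a. \<forall>x\<in>V. \<forall>y\<in>V. x * a * y + y * a * x = 0}"

definition closed_csubspace :: "'a set \<Rightarrow> bool" where
  "closed_csubspace B \<longleftrightarrow> 0 \<in> B \<and> (\<forall>x\<in>B. \<forall>y\<in>B. x + y \<in> B) \<and>
     (\<forall>c. \<forall>x\<in>B. scaleC c x \<in> B) \<and> closed B"

definition cstar_subalgebra :: "'a set \<Rightarrow> bool" where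
  "cstar_subalgebra B \<longleftrightarrow> closed_csubspace B \<and>
     (\<forall>x\<in>B. \<forall>y\<in>B. x * y \<in> B) \<and> (\<forall>x\<in>B. adj x \<in> B)"

end

end

theory Submission
  imports Defs "HOL-Analysis.Analysis" "HOL-Computational_Algebra.Fundamental_Theorem_Algebra"
begin

hide_const (open) Sigma_Algebra.positive


context cstar_algebra begin
lemma scaleC_zero_right[simp]: "scaleC c 0 = 0"
proof -
  have "scaleC c 0 + scaleC c 0 = scaleC c 0 + 0" by (simp flip: scaleC_add_right)
  then show ?thesis by (simp only: add_left_cancel)
qed
lemma scaleC_zero_left[simp]: "scaleC 0 x = 0"
proof -
  have "scaleC 0 x + scaleC 0 x = scaleC 0 x + 0" by (simp flip: scaleC_add_left)
  then show ?thesis by (simp only: add_left_cancel)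
qed
lemma scaleC_minus_right: "scaleC c (- x) = - scaleC c x"
proof -
  have "scaleC c (- x) + scaleC c x = 0" by (simp flip: scaleC_add_right)
  then show ?thesis by (simp add: eq_neg_iff_add_eq_0)
qed
lemma scaleC_minus_left: "scaleC (- c) x = - scaleC c x"
proof -
  have "scaleC (- c) x + scaleC c x = 0" by (simp flip: scaleC_add_left)
  then show ?thesis by (simp add: eq_neg_iff_add_eq_0)
qed
lemma scaleC_diff_right: "scaleC c (x - y) = scaleC c x - scaleC c y"
  by (simp only: diff_conv_add_uminus scaleC_add_right scaleC_minus_right)
lemma scaleC_diff_left: "scaleC (c - d) x = scaleC c x - scaleC d x"
  using scaleC_add_left[of c "-d" x] by (simp add: scaleC_minus_left)
lemma assoc_aux: "scaleC (a*b) z + scaleC c (scaleC a y + scaleC b x + x*y) + (scaleC a y + scaleC b x + x*y)*z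
  = scaleC a (scaleC b z + scaleC c y + y*z) + scaleC (b*c) x + x*(scaleC b z + scaleC c y + y*z)"
  apply (simp only: scaleC_add_right scaleC_scaleC distrib_left distrib_right scaleC_mult_left scaleC_mult_right mult.assoc)
  apply (simp only: mult.commute[of c a] mult.commute[of c b] add.assoc)
  apply (simp only: add.left_commute)
  done
lemma adj_zero[simp]: "adj 0 = 0"
proof -
  have "adj 0 + adj 0 = adj 0 + 0" by (simp flip: adj_add)
  then show ?thesis by (simp only: add_left_cancel)
qed
lemma adj_minus: "adj (- x) = - adj x"
proof -
  have "adj (- x) + adj x = 0" by (simp flip: adj_add)
  then show ?thesis by (simp add: eq_neg_iff_add_eq_0)
qed
lemma adj_diff: "adj (x - y) = adj x - adj y"
  by (simp only: diff_conv_add_uminus adj_add adj_minus)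
lemma scaleC_sum: "scaleC c (sum f A) = sum (\<lambda>i. scaleC c (f i)) A"
  by (induction A rule: infinite_finite_induct) (simp_all add: scaleC_add_right)
lemma sum_scaleC: "scaleC (sum f A) x = sum (\<lambda>i. scaleC (f i) x) A"
  by (induction A rule: infinite_finite_induct) (simp_all add: scaleC_add_left)
lemma adj_sum: "adj (sum f A) = sum (\<lambda>i. adj (f i)) A"
  by (induction A rule: infinite_finite_induct) (simp_all add: adj_add)
lemma norm_adj_le: "norm x \<le> norm (adj x)"
proof (cases "norm x = 0")
  case False
  have "norm x * norm x \<le> norm (adj x) * norm x"
    using cstar_identity[of x] norm_mult_ineq[of "adj x" x] by (simp add: power2_eq_square)
  with False show ?thesis by (simp add: mult_le_cancel_right)
qed simp
lemma norm_adj: "norm (adj x) = norm x"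
  using norm_adj_le[of x] norm_adj_le[of "adj x"] adj_adj[of x] by simp
end

datatype 'a unitz = U complex 'a

instantiation unitz :: (cstar_algebra) ring_1
begin
fun plus_unitz where "U a x + U b y = U (a + b) (x + y)"
fun times_unitz where "U a x * U b y = U (a * b) (scaleC a y + scaleC b x + x * y)"
fun uminus_unitz where "- U a x = U (- a) (- x)"
fun minus_unitz where "U a x - U b y = U (a - b) (x - y)"
definition zero_unitz where "0 = U 0 0"
definition one_unitz where "1 = U 1 0"
instance
proof
  fix p q r :: "'a unitz"
  show "p * q * r = p * (q * r)"
    by (cases p; cases q; cases r) (simp only: times_unitz.simps assoc_aux mult.assoc)
  show "p + q + r = p + (q + r)" by (cases p; cases q; cases r) (simp only: plus_unitz.simps add.assoc)
  show "p + q = q + p" by (cases p; cases q) (simp only: plus_unitz.simps add.commute)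
  show "0 + p = p" by (cases p) (simp only: zero_unitz_def plus_unitz.simps add_0_left)
  show "- p + p = 0" by (cases p) (simp only: zero_unitz_def plus_unitz.simps uminus_unitz.simps left_minus)
  show "p - q = p + - q" by (cases p; cases q) (simp only: minus_unitz.simps uminus_unitz.simps plus_unitz.simps diff_conv_add_uminus)
  show "1 * p = p" by (cases p) (simp only: one_unitz_def times_unitz.simps scaleC_one mult_1_left scaleC_zero_left scaleC_zero_right mult_zero_left add_0_right add_0_left)
  show "p * 1 = p" by (cases p) (simp only: one_unitz_def times_unitz.simps scaleC_one mult_1_right scaleC_zero_left scaleC_zero_right mult_zero_right add_0_right add_0_left)
  show "(p + q) * r = p * r + q * r"
    by (cases p; cases q; cases r) (simp only: times_unitz.simps plus_unitz.simps scaleC_add_right scaleC_add_left distrib_right add_ac)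
  show "p * (q + r) = p * q + p * r"
    by (cases p; cases q; cases r) (simp only: times_unitz.simps plus_unitz.simps scaleC_add_right scaleC_add_left distrib_left add_ac)
  show "(0::'a unitz) \<noteq> 1" by (simp add: zero_unitz_def one_unitz_def)
qed
end


definition cof :: "complex \<Rightarrow> 'a::cstar_algebra unitz" where "cof c = U c 0"
definition pure :: "'a::cstar_algebra \<Rightarrow> 'a unitz" where "pure x = U 0 x"
fun sc :: "'a unitz \<Rightarrow> complex" where "sc (U a x) = a"
fun vc :: "'a unitz \<Rightarrow> 'a" where "vc (U a x) = x"
fun unorm :: "'a::cstar_algebra unitz \<Rightarrow> real" where "unorm (U a x) = cmod a + norm x"

lemma U_eq: "U a x = cof a + pure (x::'a::cstar_algebra)"
  by (simp add: cof_def pure_def)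
lemma cof_add: "cof (a + b) = (cof a + cof b :: 'a::cstar_algebra unitz)"
  by (simp add: cof_def)
lemma cof_mult: "cof (a * b) = (cof a * cof b :: 'a::cstar_algebra unitz)"
  by (simp add: cof_def)
lemma cof_minus: "cof (- a) = (- cof a :: 'a::cstar_algebra unitz)"
  by (simp add: cof_def)
lemma cof_diff: "cof (a - b) = (cof a - cof b :: 'a::cstar_algebra unitz)"
  by (simp add: cof_def)
lemma cof_0[simp]: "cof 0 = (0 :: 'a::cstar_algebra unitz)"
  by (simp add: cof_def zero_unitz_def)
lemma cof_1[simp]: "cof 1 = (1 :: 'a::cstar_algebra unitz)"
  by (simp add: cof_def one_unitz_def)
lemma pure_add: "pure (x + y) = pure x + pure (y::'a::cstar_algebra)"
  by (simp add: pure_def)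
lemma pure_minus: "pure (- x) = - pure (x::'a::cstar_algebra)"
  by (simp add: pure_def)
lemma pure_diff: "pure (x - y) = pure x - pure (y::'a::cstar_algebra)"
  by (simp add: pure_def)
lemma pure_0[simp]: "pure 0 = (0 :: 'a::cstar_algebra unitz)"
  by (simp add: pure_def zero_unitz_def)
lemma pure_mult: "pure (x * y) = pure x * pure (y::'a::cstar_algebra)"
  by (simp add: pure_def)
lemma pure_inj: "pure x = pure y \<longleftrightarrow> x = (y::'a::cstar_algebra)"
  by (simp add: pure_def)
lemma pure_eq_0: "pure x = 0 \<longleftrightarrow> x = (0::'a::cstar_algebra)"
  by (simp add: pure_def zero_unitz_def)
lemma cof_pure: "cof c * pure x = pure (scaleC c (x::'a::cstar_algebra))"
  by (simp add: pure_def cof_def)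
lemma pure_cof: "pure x * cof c = pure (scaleC c (x::'a::cstar_algebra))"
  by (simp add: pure_def cof_def)
lemma cof_comm: "cof c * u = u * (cof c :: 'a::cstar_algebra unitz)"
  by (cases u) (simp add: cof_def mult.commute)
lemma cof_of_nat: "of_nat n = (cof (of_nat n) :: 'a::cstar_algebra unitz)"
  by (induction n) (simp_all add: cof_add)
lemma cof_sum: "cof (sum f A) = (sum (\<lambda>i. cof (f i)) A :: 'a::cstar_algebra unitz)"
  by (induction A rule: infinite_finite_induct) (simp_all add: cof_add)
lemma pure_sum: "pure (sum f A) = (sum (\<lambda>i. pure (f i)) A :: 'a::cstar_algebra unitz)"
  by (induction A rule: infinite_finite_induct) (simp_all add: pure_add)
lemma cof_power: "cof (c ^ n) = (cof c ^ n :: 'a::cstar_algebra unitz)"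
  by (induction n) (simp_all add: cof_mult)
lemma sc_add: "sc (u + v) = sc u + sc (v::'a::cstar_algebra unitz)"
  by (cases u; cases v) simp
lemma sc_mult: "sc (u * v) = sc u * sc (v::'a::cstar_algebra unitz)"
  by (cases u; cases v) simp
lemma sc_cof[simp]: "sc (cof c :: 'a::cstar_algebra unitz) = c" by (simp add: cof_def)
lemma sc_pure[simp]: "sc (pure x :: 'a::cstar_algebra unitz) = 0" by (simp add: pure_def)
lemma sc_one[simp]: "sc (1 :: 'a::cstar_algebra unitz) = 1" by (simp add: one_unitz_def)
lemma unitz_decomp: "u = cof (sc u) + pure (vc (u::'a::cstar_algebra unitz))"
  by (cases u) (simp add: cof_def pure_def)

lemma unorm_pure[simp]: "unorm (pure x) = norm x" by (simp add: pure_def)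
lemma unorm_cof[simp]: "unorm (cof c :: 'a::cstar_algebra unitz) = cmod c" by (simp add: cof_def)
lemma unorm_one[simp]: "unorm (1 :: 'a::cstar_algebra unitz) = 1" by (simp add: one_unitz_def)
lemma unorm_nonneg: "0 \<le> unorm u" by (cases u) simp
lemma unorm_add: "unorm (u + v) \<le> unorm u + unorm (v::'a::cstar_algebra unitz)"
proof (cases u; cases v)
  fix a x b y assume [simp]: "u = U a x" "v = U b y"
  have "cmod (a + b) \<le> cmod a + cmod b" "norm (x + y) \<le> norm x + norm y"
    by (rule norm_triangle_ineq)+
  then show ?thesis by simp
qed
lemma unorm_minus: "unorm (- u) = unorm u"
  by (cases u) simp
lemma unorm_diff: "unorm (u - v) \<le> unorm u + unorm (v::'a::cstar_algebra unitz)"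
  using unorm_add[of u "-v"] by (simp add: unorm_minus)
lemma unorm_mult: "unorm (u * v) \<le> unorm u * unorm (v::'a::cstar_algebra unitz)"
proof (cases u; cases v)
  fix a x b y assume [simp]: "u = U a x" "v = U b y"
  have "norm (scaleC a y + scaleC b x + x * y) \<le> cmod a * norm y + cmod b * norm x + norm x * norm y"
    by (rule order_trans[OF norm_triangle_ineq add_mono[OF order_trans[OF norm_triangle_ineq] norm_mult_ineq]])
       (simp add: norm_scaleC)
  then show ?thesis by (simp add: norm_mult algebra_simps)
qed
lemma unorm_one_pure: "unorm (1 + pure x) = 1 + norm (x::'a::cstar_algebra)"
  by (simp add: one_unitz_def pure_def)


definition uinv :: "'a::cstar_algebra unitz \<Rightarrow> bool" where
  "uinv u \<longleftrightarrow> (\<exists>v. u * v = 1 \<and> v * u = 1)"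

lemma uinv_mult: "uinv u \<Longrightarrow> uinv v \<Longrightarrow> uinv (u * v)"
  unfolding uinv_def
proof (elim exE conjE)
  fix u' v' assume a: "u * u' = 1" "u' * u = 1" "v * v' = 1" "v' * v = 1"
  have "u * v * (v' * u') = 1" by (simp add: mult.assoc a flip: mult.assoc[of v])
  moreover have "(v' * u') * (u * v) = 1" by (simp add: mult.assoc a flip: mult.assoc[of u'])
  ultimately show "\<exists>w. u * v * w = 1 \<and> w * (u * v) = 1" by blast
qed

lemma uinv_cof: "c \<noteq> 0 \<Longrightarrow> uinv (cof c :: 'a::cstar_algebra unitz)"
  unfolding uinv_def
  by (rule exI[of _ "cof (1/c)"]) (simp flip: cof_mult)

lemma uinv_one: "uinv 1"
  unfolding uinv_def by (rule exI[of _ 1]) simp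

lemma qinv_uinv:
  fixes x c :: "'a::cstar_algebra"
  assumes "l \<noteq> 0" "x * c - scaleC (1/l) x - scaleC l c = 0" "c * x - scaleC (1/l) x - scaleC l c = 0"
  shows "uinv (pure x - cof l)"
  unfolding uinv_def
proof (rule exI[of _ "pure c - cof (1/l)"], rule conjI)
  have e1: "pure x - cof l = U (- l) x" "pure c - cof (1/l) = U (- (1/l)) c"
    by (simp_all add: pure_def cof_def)
  have "scaleC (- l) c + scaleC (- (1 / l)) x + x * c = x * c - scaleC (1/l) x - scaleC l c"
    by (simp add: scaleC_minus_left algebra_simps)
  moreover have "scaleC (- (1 / l)) x + scaleC (- l) c + c * x = c * x - scaleC (1/l) x - scaleC l c"
    by (simp add: scaleC_minus_left algebra_simps)
  ultimately show "(pure x - cof l) * (pure c - cof (1 / l)) = 1" "(pure c - cof (1 / l)) * (pure x - cof l) = 1"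
    using assms by (simp_all add: e1 one_unitz_def)
qed

lemma not_spec_uinv: "l \<notin> cspectrum (x::'a::cstar_algebra) \<Longrightarrow> uinv (pure x - cof l)"
  unfolding cspectrum_def using qinv_uinv by blast

primrec apw :: "nat \<Rightarrow> 'a::cstar_algebra \<Rightarrow> 'a" where
  "apw 0 x = x" | "apw (Suc n) x = x * apw n x"

lemma pure_apw: "pure (apw n x) = pure x ^ Suc n"
  by (induction n) (simp_all add: pure_mult)

lemma apw_comm: "x * apw n x = apw n x * x"
proof -
  have "pure (x * apw n x) = pure (apw n x * x)"
    by (simp only: pure_mult pure_apw power_commutes)
  then show ?thesis by (simp only: pure_inj)
qed

lemma apw_Suc': "apw (Suc n) x = apw n x * x"
  using apw_comm by simp

lemma apw_add: "apw (m + n + 1) x = apw m x * apw n x"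
proof -
  have "pure (apw (m + n + 1) x) = pure (apw m x * apw n x)"
  proof -
    have "Suc (m + n + 1) = Suc m + Suc n" by simp
    then show ?thesis by (simp only: pure_mult pure_apw power_add)
  qed
  then show ?thesis by (simp add: pure_inj)
qed

lemma apw_adj:
  fixes x :: "'a::cstar_algebra"
  assumes "adj x = x" shows "adj (apw n x) = apw n x"
proof (induction n)
  case (Suc n)
  have "adj (apw (Suc n) x) = adj (apw n x) * adj x" by (simp add: adj_mult)
  also have "\<dots> = x * apw n x" by (simp only: Suc assms apw_comm)
  finally show ?case by simp
qed (simp add: assms)

lemma norm_apw_le: "norm (apw n x) \<le> norm x ^ Suc n"
proof (induction n)
  case (Suc n)
  have "norm (apw (Suc n) x) \<le> norm x * norm (apw n x)" by (simp add: norm_mult_ineq)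
  also have "\<dots> \<le> norm x * norm x ^ Suc n" by (rule mult_left_mono[OF Suc]) simp
  finally show ?case by simp
qed simp

lemma norm_selfadj_sq: "adj (y::'a::cstar_algebra) = y \<Longrightarrow> norm (y * y) = norm y ^ 2"
  using cstar_identity[of y] by simp

lemma norm_apw_selfadj:
  fixes x :: "'a::cstar_algebra"
  assumes "adj x = x" shows "norm (apw (2^m - 1) x) = norm x ^ (2^m)"
proof (induction m)
  case (Suc m)
  have e: "2 ^ Suc m - 1 = (2^m - 1) + (2^m - 1) + (1::nat)"
  proof -
    have p: "1 \<le> (2::nat)^m" by simp
    show ?thesis by (simp only: power_Suc) (use p in arith)
  qed
  have "norm (apw (2 ^ Suc m - 1) x) = norm (apw (2^m - 1) x * apw (2^m - 1) x)"
    by (simp only: e apw_add)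
  also have "\<dots> = norm (apw (2^m - 1) x) ^ 2"
    by (rule norm_selfadj_sq) (simp add: apw_adj assms)
  also have "\<dots> = (norm x ^ 2^m)^2" using Suc by simp
  also have "\<dots> = norm x ^ (2 ^ Suc m)"
    by (simp add: power_mult[symmetric] mult.commute)
  finally show ?case .
qed simp

lemma bounded_linear_scaleC: "bounded_linear (scaleC c :: 'a::cstar_algebra \<Rightarrow> 'a)"
proof (rule bounded_linear_intro[where K="cmod c"])
  show "scaleC c (x + y) = scaleC c x + scaleC c y" for x y :: 'a by (rule scaleC_add_right)
  show "scaleC c (r *\<^sub>R x) = r *\<^sub>R scaleC c x" for r and x :: 'a
    by (simp add: scaleC_scaleC mult.commute flip: scaleC_of_real)
  show "norm (scaleC c x) \<le> norm x * cmod c" for x :: 'a by (simp add: norm_scaleC mult.commute)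
qed

lemma neumann:
  fixes x :: "'a::cstar_algebra"
  assumes "norm x < cmod l" shows "uinv (pure x - cof l)"
proof -
  have l0: "l \<noteq> 0" using assms norm_ge_zero[of x] by auto
  define f where "f n = scaleC (1 / l ^ (n+2)) (apw n x)" for n
  define r where "r = norm x / cmod l"
  have r: "0 \<le> r" "r < 1" using assms l0 by (auto simp: r_def)
  have bnd: "norm (f n) \<le> (norm x / cmod l ^ 2) * r ^ n" for n
  proof -
    have "norm (f n) = cmod (1 / l ^ (n+2)) * norm (apw n x)"
      by (simp only: f_def norm_scaleC)
    also have "cmod (1 / l ^ (n+2)) = 1 / cmod l ^ (n+2)"
      by (simp only: norm_divide norm_power norm_one)
    finally have "norm (f n) = norm (apw n x) / cmod l ^ (n + 2)" by simp
    also have "\<dots> \<le> norm x ^ Suc n / cmod l ^ (n + 2)"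
      by (rule divide_right_mono[OF norm_apw_le]) simp
    also have "\<dots> = (norm x / cmod l ^ 2) * r ^ n"
      by (simp add: r_def power_divide field_simps l0 power_add power2_eq_square)
    finally show ?thesis .
  qed
  have sf: "summable f"
    by (rule summable_comparison_test[OF _ summable_mult[OF summable_geometric[of r], of "norm x / cmod l ^ 2"]])
       (use bnd r in auto)
  define S where "S = suminf f"
  have shift: "scaleC l S = scaleC (1/l) x + (\<Sum>n. f n * x)"
  proof -
    have "scaleC l S = (\<Sum>n. scaleC l (f n))"
      unfolding S_def by (rule bounded_linear.suminf[OF bounded_linear_scaleC sf])
    also have "\<dots> = scaleC (1/l) x + (\<Sum>n. scaleC l (f (Suc n)))"
    proof -
      have s2: "summable (\<lambda>n. scaleC l (f n))"
        by (rule bounded_linear.summable[OF bounded_linear_scaleC sf])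
      show ?thesis using suminf_split_head[OF s2] l0
        by (simp add: f_def scaleC_scaleC field_simps)
    qed
    also have "(\<Sum>n. scaleC l (f (Suc n))) = (\<Sum>n. f n * x)"
      by (rule arg_cong[where f=suminf], rule ext)
         (simp add: f_def scaleC_scaleC scaleC_mult_left apw_comm l0 field_simps power_add)
    finally show ?thesis .
  qed
  have shift': "(\<Sum>n. f n * x) = (\<Sum>n. x * f n)"
    by (rule arg_cong[where f=suminf], rule ext) (simp add: f_def scaleC_mult_left scaleC_mult_right apw_comm)
  define c where "c = - S"
  have "x * c - scaleC (1/l) x - scaleC l c = 0"
    using shift shift' by (simp add: c_def S_def scaleC_minus_right suminf_mult[OF sf] )
  moreover have "c * x - scaleC (1/l) x - scaleC l c = 0"
    using shift by (simp add: c_def S_def scaleC_minus_right suminf_mult2[OF sf])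
  ultimately show ?thesis by (rule qinv_uinv[OF l0])
qed


lemma geom_unitz: "(1 - Y) * (\<Sum>k<N. Y ^ k) = 1 - (Y::'a::cstar_algebra unitz) ^ N"
proof (induction N)
  case (Suc N)
  have "(1 - Y) * (\<Sum>k<Suc N. Y ^ k) = (1 - Y) * (\<Sum>k<N. Y ^ k) + (1 - Y) * Y ^ N"
    by (simp add: distrib_left)
  also have "\<dots> = 1 - Y ^ N + (Y ^ N - Y ^ Suc N)"
    using Suc by (simp add: left_diff_distrib)
  also have "\<dots> = 1 - Y ^ Suc N" by simp
  finally show ?case .
qed simp

lemma cof_mult_power: "(cof c * Y) ^ k = cof (c ^ k) * (Y::'a::cstar_algebra unitz) ^ k"
proof (induction k)
  case (Suc k)
  have "(cof c * Y) ^ Suc k = cof c * Y * (cof (c ^ k) * Y ^ k)" by (simp add: Suc)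
  also have "\<dots> = cof c * ((Y * cof (c ^ k)) * Y ^ k)" by (simp only: mult.assoc)
  also have "Y * cof (c ^ k) = cof (c ^ k) * Y" by (rule cof_comm[symmetric])
  also have "cof c * ((cof (c ^ k) * Y) * Y ^ k) = cof c * cof (c ^ k) * (Y * Y ^ k)" by (simp only: mult.assoc)
  finally show ?case by (simp add: cof_mult)
qed simp

lemma inv_unique_unitz: "u * v = 1 \<Longrightarrow> w * u = 1 \<Longrightarrow> v = (w::'a::cstar_algebra unitz)"
  by (metis mult.assoc mult_1_left mult_1_right)

lemma roots_sum_zero:
  assumes "0 < k" "k < N"
  shows "(\<Sum>j<N. cis (2 * pi / real N) ^ (j * k)) = 0"
proof -
  define w where "w = cis (2 * pi * real k / real N)"
  have w1: "w \<noteq> 1"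
  proof
    assume "w = 1"
    then have "cis (2 * pi * real k / real N) = 1" by (simp add: w_def)
    then obtain i :: int where "2 * pi * real k / real N = 2 * pi * of_int i"
      by (auto simp: complex_eq_iff cos_one_2pi_int)
    then have "real k = real N * of_int i" using assms by (simp add: field_simps)
    then have "int k = int N * i" by (metis of_int_eq_iff of_int_mult of_int_of_nat_eq)
    show False
    proof (cases "i \<le> 0")
      case True
      then have "int N * i \<le> 0" by (simp add: mult_nonneg_nonpos)
      with \<open>int k = int N * i\<close> assms show False by simp
    next
      case False
      then have "int N * 1 \<le> int N * i" by (intro mult_left_mono) auto
      with \<open>int k = int N * i\<close> assms show False by simp
    qed
  qed
  have wN: "w ^ N = 1"
  proof -
    have "w ^ N = cis (real N * (2 * pi * real k / real N))" by (simp only: w_def Complex.DeMoivre)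
    also have "\<dots> = cis (2 * pi * real k)" by (rule arg_cong[where f=cis]) (use assms in simp)
    also have "\<dots> = 1" by (simp add: complex_eq_iff cos_int_2pin sin_int_2pin)
    finally show ?thesis .
  qed
  have "(\<Sum>j<N. cis (2 * pi / real N) ^ (j * k)) = (\<Sum>j<N. w ^ j)"
  proof (rule sum.cong[OF refl])
    fix j show "cis (2 * pi / real N) ^ (j * k) = w ^ j"
      unfolding w_def Complex.DeMoivre by (rule arg_cong[where f=cis]) (use assms in \<open>simp add: field_simps\<close>)
  qed
  also have "\<dots> = 0" using w1 wN by (simp add: geometric_sum)
  finally show ?thesis .
qed

lemma avg_identity:
  fixes Y :: "'a::cstar_algebra unitz"
  assumes N: "0 < N" and w: "w = cis (2 * pi / real N)"
    and R: "\<And>j. j < N \<Longrightarrow> R j * (1 - cof (w ^ j) * Y) = 1"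
  shows "(\<Sum>j<N. R j) * (1 - Y ^ N) = of_nat N"
proof -
  have wN: "(w ^ j) ^ N = 1" for j
  proof -
    have "w ^ N = cis (real N * (2 * pi / real N))" by (simp only: w Complex.DeMoivre)
    also have "cis (real N * (2 * pi / real N)) = cis (2 * pi)" by (rule arg_cong[where f=cis]) (use N in simp)
    also have "cis (2 * pi) = 1" by (simp add: complex_eq_iff)
    finally have "w ^ N = 1" .
    then show ?thesis by (simp add: power_mult[symmetric] mult.commute power_mult)
  qed
  have each: "R j * (1 - Y ^ N) = (\<Sum>k<N. cof (w ^ (j * k)) * Y ^ k)" if "j < N" for j
  proof -
    have "1 - Y ^ N = 1 - (cof (w ^ j) * Y) ^ N"
      by (simp add: cof_mult_power wN)
    also have "\<dots> = (1 - cof (w ^ j) * Y) * (\<Sum>k<N. (cof (w ^ j) * Y) ^ k)"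
      by (simp add: geom_unitz)
    finally have "R j * (1 - Y ^ N) = (\<Sum>k<N. (cof (w ^ j) * Y) ^ k)"
      using R[OF that] by (simp add: mult.assoc[symmetric])
    also have "\<dots> = (\<Sum>k<N. cof (w ^ (j * k)) * Y ^ k)"
      by (simp add: cof_mult_power power_mult)
    finally show ?thesis .
  qed
  have "(\<Sum>j<N. R j) * (1 - Y ^ N) = (\<Sum>j<N. R j * (1 - Y ^ N))"
    by (simp add: sum_distrib_right)
  also have "\<dots> = (\<Sum>j<N. \<Sum>k<N. cof (w ^ (j * k)) * Y ^ k)"
    by (rule sum.cong) (simp_all add: each)
  also have "\<dots> = (\<Sum>k<N. \<Sum>j<N. cof (w ^ (j * k)) * Y ^ k)"
    by (rule sum.swap)
  also have "\<dots> = (\<Sum>k<N. cof (\<Sum>j<N. w ^ (j * k)) * Y ^ k)"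
    by (simp add: cof_sum sum_distrib_right)
  also have "\<dots> = (\<Sum>k<N. if k = 0 then of_nat N else 0)"
  proof (rule sum.cong[OF refl])
    fix k assume "k \<in> {..<N}"
    then show "cof (\<Sum>j<N. w ^ (j * k)) * Y ^ k = (if k = 0 then of_nat N else 0)"
      using roots_sum_zero[of k N] by (auto simp: w cof_of_nat)
  qed
  also have "\<dots> = of_nat N" using N by (simp add: sum.delta')
  finally show ?thesis .
qed


lemma sc_diff: "sc (u - v) = sc u - sc (v::'a::cstar_algebra unitz)"
  by (cases u; cases v) simp

lemma qinv_norms:
  fixes T u :: "'a::cstar_algebra"
  assumes "T - u - T * u = 0"
  shows "norm T \<le> norm u + norm T * norm u" "norm u \<le> norm T + norm T * norm u"
proof -
  have "T = u + T * u" using assms by (simp add: algebra_simps)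
  then have "norm T = norm (u + T * u)" by simp
  also have "\<dots> \<le> norm u + norm (T * u)" by (rule norm_triangle_ineq)
  also have "\<dots> \<le> norm u + norm T * norm u" by (simp add: norm_mult_ineq)
  finally show "norm T \<le> norm u + norm T * norm u" .
  have "u = T - T * u" using assms by (simp add: algebra_simps)
  then have "norm u = norm (T - T * u)" by simp
  also have "\<dots> \<le> norm T + norm (T * u)" by (rule norm_triangle_ineq4)
  also have "\<dots> \<le> norm T + norm T * norm u" by (simp add: norm_mult_ineq)
  finally show "norm u \<le> norm T + norm T * norm u" .
qed

lemma unorm_cof_mult: "unorm (cof c * u) \<le> cmod c * unorm (u::'a::cstar_algebra unitz)"
  using unorm_mult[of "cof c" u] by simp

lemma resolvent_diff:
  fixes X :: "'a::cstar_algebra unitz"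
  assumes l: "(1 + pure a) * (1 - cof l * X) = 1"
    and m: "(1 - cof m * X) * (1 + pure b) = 1"
  shows "pure (a - b) = (1 + pure a) * (cof (l - m) * X) * (1 + pure b)"
proof -
  have "(1 + pure a) * (cof (l - m) * X) * (1 + pure b)
      = (1 + pure a) * ((1 - cof m * X) - (1 - cof l * X)) * (1 + pure b)"
    by (simp add: cof_diff left_diff_distrib)
  also have "\<dots> = (1 + pure a) * ((1 - cof m * X) * (1 + pure b)) - ((1 + pure a) * (1 - cof l * X)) * (1 + pure b)"
    by (simp add: left_diff_distrib right_diff_distrib mult.assoc)
  also have "\<dots> = pure (a - b)" by (simp add: l m pure_diff)
  finally show ?thesis by simp
qed

lemma resolvent_diff_norm:
  fixes x a b :: "'a::cstar_algebra"
  assumes l: "(1 + pure a) * (1 - cof l * pure x) = 1"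
    and m: "(1 - cof m * pure x) * (1 + pure b) = 1"
  shows "norm (a - b) \<le> (1 + norm a) * (cmod (l - m) * norm x) * (1 + norm b)"
proof -
  have "norm (a - b) = unorm ((1 + pure a) * (cof (l - m) * pure x) * (1 + pure b))"
    using resolvent_diff[OF l m] by (metis unorm_pure)
  also have "\<dots> \<le> unorm ((1 + pure a) * (cof (l - m) * pure x)) * unorm (1 + pure b)"
    by (rule unorm_mult)
  also have "\<dots> = unorm ((1 + pure a) * (cof (l - m) * pure x)) * (1 + norm b)"
    by (simp add: unorm_one_pure)
  also have "\<dots> \<le> ((1 + norm a) * (cmod (l - m) * norm x)) * (1 + norm b)"
  proof (rule mult_right_mono)
    have "unorm ((1 + pure a) * (cof (l - m) * pure x)) \<le> unorm (1 + pure a) * unorm (cof (l - m) * pure x)"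
      by (rule unorm_mult)
    also have "\<dots> \<le> (1 + norm a) * (cmod (l - m) * norm x)"
      unfolding unorm_one_pure
      by (rule mult_left_mono) (use unorm_cof_mult[of "l - m" "pure x"] in \<open>simp_all add: unorm_one_pure\<close>)
    finally show "unorm ((1 + pure a) * (cof (l - m) * pure x)) \<le> (1 + norm a) * (cmod (l - m) * norm x)" .
  qed simp
  finally show ?thesis .
qed


lemma cont_arith:
  fixes B K eta nx t D e d :: real
  assumes B: "1 \<le> B" and K: "0 < K" "nx \<le> K" "0 \<le> nx" and eta: "0 \<le> eta" "eta < d"
    and d: "d \<le> 1 / (2 * B * K)" "d \<le> e / (2 * B * B * K)" and e: "0 < e"
    and t: "0 \<le> t" "t \<le> B + t * (eta * nx) * B" and D: "D \<le> t * (eta * nx) * B"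
  shows "D < e"
proof -
  have "eta * nx \<le> d * K" using eta K by (intro mult_mono) auto
  then have a: "eta * nx * B \<le> d * K * B" using B by (intro mult_right_mono) auto
  have "d * K * B \<le> 1 / (2 * B * K) * K * B" using d K B by (intro mult_right_mono) auto
  also have "\<dots> = 1/2" using K B by (simp add: field_simps)
  finally have h: "eta * nx * B \<le> 1/2" using a by linarith
  have "t * (eta * nx) * B = t * (eta * nx * B)" by (simp add: mult.assoc)
  also have "\<dots> \<le> t * (1/2)" using h t by (intro mult_left_mono) auto
  finally have "t * (eta * nx) * B \<le> t * (1/2)" .
  then have t2: "t \<le> 2 * B" using t by linarith
  have "eta * nx * B < d * K * B"
  proof -
    have "eta * nx \<le> eta * K" using eta K by (intro mult_left_mono) auto
    also have "\<dots> < d * K" using eta K by simp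
    finally show ?thesis using B by simp
  qed
  have "D \<le> t * (eta * nx * B)" using D by (simp add: mult.assoc)
  also have "\<dots> \<le> 2 * B * (eta * nx * B)"
    using t2 by (intro mult_right_mono) (use eta K B in auto)
  also have "\<dots> \<le> 2 * B * (d * K * B)"
    using a B by (intro mult_left_mono) auto
  also have "\<dots> = d * (2 * B * B * K)" by (simp add: algebra_simps)
  also have "\<dots> \<le> e / (2 * B * B * K) * (2 * B * B * K)"
    using d B K by (intro mult_right_mono) auto
  also have "\<dots> = e" using B K by (simp add: field_simps)
  finally have "D \<le> e" .
  moreover have "D < e"
  proof -
    have "t * (eta * nx * B) \<le> 2 * B * (eta * nx * B)"
      using t2 by (intro mult_right_mono) (use eta K B in auto)
    also have "\<dots> < 2 * B * (d * K * B)"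
    proof (cases "eta * nx * B < d * K * B")
      case True then show ?thesis using B by simp
    next
      case False then show ?thesis using \<open>eta * nx * B < d * K * B\<close> by simp
    qed
    also have "\<dots> = d * (2 * B * B * K)" by (simp add: algebra_simps)
    also have "\<dots> \<le> e / (2 * B * B * K) * (2 * B * B * K)"
      using d B K by (intro mult_right_mono) auto
    also have "\<dots> = e" using B K by (simp add: field_simps)
    finally show ?thesis using D by (simp add: mult.assoc)
  qed
  ultimately show ?thesis by simp
qed


lemma qinv_exists:
  fixes x :: "'a::cstar_algebra"
  assumes H: "uinv (1 - cof l * pure x)"
  shows "\<exists>c. (1 + pure c) * (1 - cof l * pure x) = 1 \<and> (1 - cof l * pure x) * (1 + pure c) = 1"
proof -
  obtain v where v: "(1 - cof l * pure x) * v = 1" "v * (1 - cof l * pure x) = 1"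
    using H unfolding uinv_def by blast
  have "sc ((1 - cof l * pure x) * v) = 1" using v by simp
  then have "sc v = 1" by (simp add: sc_mult sc_diff)
  then have "v = 1 + pure (vc v)" using unitz_decomp[of v] by simp
  then show ?thesis using v by metis
qed

lemma gelfand_unit:
  fixes x :: "'a::cstar_algebra"
  assumes sa: "adj x = x" and H: "\<And>l. cmod l \<le> 1 \<Longrightarrow> uinv (1 - cof l * pure x)"
  shows "norm x \<le> 1"
proof -
  define P where "P l c \<longleftrightarrow> (1 + pure c) * (1 - cof l * pure x) = 1 \<and> (1 - cof l * pure x) * (1 + pure c) = 1"
    for l and c :: 'a
  define cq where "cq l = (SOME c. P l c)" for l
  have cqP: "P l (cq l)" if "cmod l \<le> 1" for l
    unfolding cq_def by (rule someI_ex) (use qinv_exists[OF H[OF that]] in \<open>simp add: P_def\<close>)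
  define D :: "complex set" where "D = cball 0 1"
  have inD: "l \<in> D \<longleftrightarrow> cmod l \<le> 1" for l by (simp add: D_def)
  have dn: "norm (cq l - cq m) \<le> (1 + norm (cq l)) * (cmod (l - m) * norm x) * (1 + norm (cq m))"
    if "l \<in> D" "m \<in> D" for l m
    by (rule resolvent_diff_norm) (use cqP that in \<open>auto simp: P_def inD\<close>)
  have cont: "continuous_on D cq"
    unfolding continuous_on_iff
  proof (intro ballI allI impI)
    fix m e assume m: "m \<in> D" and e: "(0::real) < e"
    define B where "B = 1 + norm (cq m)"
    define K where "K = norm x + 1"
    have B: "1 \<le> B" by (simp add: B_def)
    have K: "0 < K" "norm x \<le> K" using norm_ge_zero[of x] unfolding K_def by linarith+
    define d where "d = min (1 / (2 * B * K)) (e / (2 * B * B * K))"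
    have d0: "0 < d" using B K e by (simp add: d_def)
    show "\<exists>d>0. \<forall>l\<in>D. dist l m < d \<longrightarrow> dist (cq l) (cq m) < e"
    proof (intro exI conjI ballI impI)
      show "0 < d" by (fact d0)
      fix l assume l: "l \<in> D" and dl: "dist l m < d"
      have dnl: "norm (cq l - cq m) \<le> (1 + norm (cq l)) * (cmod (l - m) * norm x) * B"
        using dn[OF l m] by (simp add: B_def)
      have "norm (cq l) \<le> norm (cq m) + norm (cq l - cq m)"
        using norm_triangle_ineq[of "cq m" "cq l - cq m"] by simp
      then have tt: "1 + norm (cq l) \<le> B + (1 + norm (cq l)) * (cmod (l - m) * norm x) * B"
        using dnl by (simp add: B_def)
      show "dist (cq l) (cq m) < e"
        unfolding dist_norm
        by (rule cont_arith[where d=d, OF B K(1) K(2) norm_ge_zero norm_ge_zero _ _ _ e _ tt dnl])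
           (use dl in \<open>simp_all add: d_def dist_norm\<close>)
    qed
  qed
  have "uniformly_continuous_on D cq"
    by (rule compact_uniformly_continuous[OF cont]) (simp add: D_def)
  then obtain del where del: "0 < del"
    and uc: "\<And>l m. l \<in> D \<Longrightarrow> m \<in> D \<Longrightarrow> dist l m < del \<Longrightarrow> dist (cq l) (cq m) < 1/4"
    unfolding uniformly_continuous_on_def by (meson zero_less_divide_1_iff zero_less_numeral)
  define w where "w N = cis (2 * pi / real N)" for N :: nat
  define T where "T r N = scaleC (1 / of_nat N) (\<Sum>j<N. cq (w N ^ j * complex_of_real r))" for r :: real and N :: nat
  have cw: "cmod (w N ^ j) = 1" for N j by (simp add: w_def norm_power)
  have inD_r: "w N ^ j * complex_of_real r \<in> D" if "0 \<le> r" "r \<le> 1" for N j r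
    using that by (simp add: inD norm_mult cw)
  have Tid: "T r N - apw (N - 1) (scaleC (complex_of_real r) x)
             - T r N * apw (N - 1) (scaleC (complex_of_real r) x) = 0"
    if r: "0 \<le> r" "r \<le> 1" and N: "0 < N" for r N
  proof -
    define Y where "Y = cof (complex_of_real r) * pure x"
    define R where "R j = 1 + pure (cq (w N ^ j * complex_of_real r))" for j
    have Rj: "R j * (1 - cof (w N ^ j) * Y) = 1" if "j < N" for j
    proof -
      have "P (w N ^ j * complex_of_real r) (cq (w N ^ j * complex_of_real r))"
        by (rule cqP) (use inD_r[OF r, of N j] in \<open>simp add: inD\<close>)
      then show ?thesis by (simp add: P_def R_def Y_def cof_mult mult.assoc)
    qed
    have avg: "(\<Sum>j<N. R j) * (1 - Y ^ N) = of_nat N"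
      by (rule avg_identity[OF N w_def Rj])
    have sumR: "(\<Sum>j<N. R j) = of_nat N + pure (\<Sum>j<N. cq (w N ^ j * complex_of_real r))"
      by (simp add: R_def sum.distrib pure_sum)
    have eq1: "1 + pure (T r N) = cof (1 / of_nat N) * (\<Sum>j<N. R j)"
      using N by (simp add: sumR T_def distrib_left cof_of_nat cof_pure flip: cof_mult)
    have YN: "Y ^ N = pure (apw (N - 1) (scaleC (complex_of_real r) x))"
      using N by (simp add: Y_def cof_pure pure_apw)
    have "(1 + pure (T r N)) * (1 - Y ^ N) = cof (1 / of_nat N) * of_nat N"
      by (simp add: eq1 mult.assoc avg)
    also have "\<dots> = 1" using N by (simp add: cof_of_nat flip: cof_mult)
    finally have "(1 + pure (T r N)) * (1 - pure (apw (N - 1) (scaleC (complex_of_real r) x))) = 1"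
      by (simp add: YN)
    then have "pure (T r N - apw (N - 1) (scaleC (complex_of_real r) x)
             - T r N * apw (N - 1) (scaleC (complex_of_real r) x)) = 0"
      by (simp add: pure_diff pure_mult pure_add algebra_simps)
    then show ?thesis by (simp add: pure_eq_0)
  qed
  have normu: "norm (apw (2^m - 1) (scaleC (complex_of_real r) x)) = (r * norm x) ^ (2^m)"
    if "0 \<le> r" for r m
  proof -
    have "adj (scaleC (complex_of_real r) x) = scaleC (complex_of_real r) x"
      by (simp add: adj_scaleC sa)
    then have "norm (apw (2^m - 1) (scaleC (complex_of_real r) x)) = norm (scaleC (complex_of_real r) x) ^ (2^m)"
      by (rule norm_apw_selfadj)
    then show ?thesis using that by (simp add: norm_scaleC)
  qed
  have Tdiff: "norm (T r' N - T r N) \<le> 1/4"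
    if r: "0 \<le> r" "r \<le> 1" and r': "0 \<le> r'" "r' \<le> 1" and rr: "\<bar>r' - r\<bar> < del" and N: "0 < N" for r r' N
  proof -
    have each: "norm (cq (w N ^ j * complex_of_real r') - cq (w N ^ j * complex_of_real r)) \<le> 1/4" for j
    proof -
      have "dist (w N ^ j * complex_of_real r') (w N ^ j * complex_of_real r) = \<bar>r' - r\<bar>"
        by (simp add: dist_norm norm_mult cw flip: right_diff_distrib of_real_diff)
      then have "dist (cq (w N ^ j * complex_of_real r')) (cq (w N ^ j * complex_of_real r)) < 1/4"
        using uc[OF inD_r[OF r'] inD_r[OF r]] rr by simp
      then show ?thesis by (simp add: dist_norm)
    qed
    have "T r' N - T r N = scaleC (1 / of_nat N)
       (\<Sum>j<N. cq (w N ^ j * complex_of_real r') - cq (w N ^ j * complex_of_real r))"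
      by (simp add: T_def scaleC_diff_right sum_subtractf)
    also have "norm \<dots> = (1 / real N) * norm (\<Sum>j<N. cq (w N ^ j * complex_of_real r') - cq (w N ^ j * complex_of_real r))"
      by (simp add: norm_scaleC norm_divide)
    also have "\<dots> \<le> (1 / real N) * (\<Sum>j<N. norm (cq (w N ^ j * complex_of_real r') - cq (w N ^ j * complex_of_real r)))"
      by (intro mult_left_mono norm_sum) auto
    also have "\<dots> \<le> (1 / real N) * (\<Sum>j<N. 1/4)"
      by (intro mult_left_mono sum_mono each) auto
    also have "\<dots> = 1/4" using N by simp
    finally show ?thesis .
  qed
  have step: "r' * norm x \<le> 1"
    if r: "0 \<le> r" "r \<le> 1" "r * norm x < 1" and r': "0 \<le> r'" "r' \<le> 1" and rr: "\<bar>r' - r\<bar> < del" for r r'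
  proof -
    have rx0: "0 \<le> r * norm x" using r by simp
    obtain n where n: "(r * norm x) ^ n < 1/8" using real_arch_pow_inv[of "1/8" "r * norm x"] r by auto
    define N :: nat where "N = 2 ^ n"
    have N0: "0 < N" by (simp add: N_def)
    define u where "u = apw (N - 1) (scaleC (complex_of_real r) x)"
    define u' where "u' = apw (N - 1) (scaleC (complex_of_real r') x)"
    have "norm u = (r * norm x) ^ N" using normu[OF r(1)] by (simp add: u_def N_def)
    also have "\<dots> \<le> (r * norm x) ^ n"
      by (rule power_decreasing) (use rx0 r in \<open>auto simp: N_def less_imp_le[OF less_exp]\<close>)
    finally have nu: "norm u \<le> 1/8" using n by simp
    have q1: "norm (T r N) \<le> norm u + norm (T r N) * norm u"
      using qinv_norms(1)[OF Tid[OF r(1,2) N0]] by (simp add: u_def)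
    have "norm (T r N) * (1 - norm u) \<le> norm u" using q1 by (simp add: algebra_simps)
    moreover have "7/8 \<le> 1 - norm u" using nu by simp
    ultimately have "norm (T r N) * (7/8) \<le> 1/8"
      using nu by (smt (verit) mult_left_mono norm_ge_zero)
    then have nT: "norm (T r N) \<le> 1/4" by simp
    have "norm (T r' N) \<le> norm (T r N) + norm (T r' N - T r N)"
      using norm_triangle_ineq[of "T r N" "T r' N - T r N"] by simp
    then have nT': "norm (T r' N) \<le> 1/2" using nT Tdiff[OF r(1,2) r' rr N0] by simp
    have q2: "norm u' \<le> norm (T r' N) + norm (T r' N) * norm u'"
      using qinv_norms(2)[OF Tid[OF r' N0]] by (simp add: u'_def)
    have "norm (T r' N) * norm u' \<le> 1/2 * norm u'" using nT' by (intro mult_right_mono) auto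
    then have "norm u' \<le> 1" using q2 nT' by simp
    then have "(r' * norm x) ^ N \<le> 1" using normu[OF r'(1)] by (simp add: u'_def N_def)
    then show ?thesis using N0 r' by (simp add: power_le_one_iff)
  qed
  have ind: "norm x * min 1 (real k * del / 2) \<le> 1" for k
  proof (induction k)
    case 0 then show ?case by simp
  next
    case (Suc k)
    define r0 where "r0 = min 1 (real k * del / 2)"
    define r' where "r' = min 1 (real (Suc k) * del / 2)"
    define r where "r = max 0 (r0 - del / 4)"
    have hr0: "norm x * r0 \<le> 1" using Suc by (simp add: r0_def)
    have r0b: "0 \<le> r0" "r0 \<le> 1" using del by (auto simp: r0_def)
    have r'b: "0 \<le> r'" "r' \<le> 1" using del by (auto simp: r'_def)
    have rb: "0 \<le> r" "r \<le> r0" using r0b del by (auto simp: r_def)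
    have r0r': "r0 \<le> r'" "r' \<le> r0 + del / 2" using del
      by (auto simp: r0_def r'_def min_def distrib_right)
    have rr: "\<bar>r' - r\<bar> < del" using r0r' rb del by (auto simp: r_def)
    show ?case
    proof (cases "norm x = 0")
      case True then show ?thesis by simp
    next
      case False
      then have nx: "0 < norm x" by simp
      have "r * norm x < 1"
      proof (cases "r = 0")
        case True then show ?thesis by simp
      next
        case False
        then have "r < r0" using del rb by (auto simp: r_def)
        then have "r * norm x < r0 * norm x" using nx by simp
        then show ?thesis using hr0 by (simp add: mult.commute)
      qed
      then have "r' * norm x \<le> 1" using step[OF rb(1) _ _ r'b rr] rb r0b by simp
      then show ?thesis by (simp add: r'_def mult.commute)
    qed
  qed
  obtain k :: nat where k: "2 / del < real k" using reals_Archimedean2 by blast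
  then have "1 \<le> real k * del / 2" using del by (simp add: field_simps)
  then have "min 1 (real k * del / 2) = 1" by simp
  then show ?thesis using ind[of k] by simp
qed


lemma gelfand:
  fixes h :: "'a::cstar_algebra"
  assumes sa: "adj h = h" and rho: "0 < rho"
    and H: "\<And>l. rho \<le> cmod l \<Longrightarrow> uinv (pure h - cof l)"
  shows "norm h \<le> rho"
proof -
  define x where "x = scaleC (complex_of_real (1 / rho)) h"
  have sax: "adj x = x" by (simp add: x_def adj_scaleC sa)
  have "norm x \<le> 1"
  proof (rule gelfand_unit[OF sax])
    fix lam :: complex assume lam: "cmod lam \<le> 1"
    show "uinv (1 - cof lam * pure x)"
    proof (cases "lam = 0")
      case True then show ?thesis by (simp add: uinv_one)
    next
      case False
      define l where "l = complex_of_real rho / lam"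
      have "rho \<le> cmod l"
      proof -
        have "cmod l = rho / cmod lam" using rho by (simp add: l_def norm_divide)
        moreover have "rho * 1 \<le> rho / cmod lam * 1" using lam False rho
          by (simp add: field_simps)
        ultimately show ?thesis by simp
      qed
      then have u1: "uinv (pure h - cof l)" by (rule H)
      have "cof (- lam / complex_of_real rho) * (pure h - cof l)
          = pure (scaleC (- lam / complex_of_real rho) h) - cof (- lam / complex_of_real rho * l)"
        by (simp only: right_diff_distrib cof_pure cof_mult)
      also have "- lam / complex_of_real rho * l = - 1" using False rho by (simp add: l_def)
      also have "pure (scaleC (- lam / complex_of_real rho) h) - cof (- 1) = 1 - cof lam * pure x"
        by (simp add: cof_minus cof_pure x_def scaleC_scaleC scaleC_minus_left pure_minus divide_inverse)
      finally have eq: "1 - cof lam * pure x = cof (- lam / complex_of_real rho) * (pure h - cof l)" by simp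
      show ?thesis unfolding eq
        by (rule uinv_mult[OF uinv_cof u1]) (use False rho in simp)
    qed
  qed
  moreover have "cmod (1 / complex_of_real rho) = 1 / rho" using rho by (simp add: norm_divide)
  ultimately have "norm h * (1 / rho) \<le> 1" by (simp add: x_def norm_scaleC mult.commute)
  then show ?thesis using rho by (simp add: field_simps)
qed



definition aev :: "'a::cstar_algebra \<Rightarrow> complex poly \<Rightarrow> 'a" where
  "aev s p = (\<Sum>i<degree p. scaleC (coeff p (Suc i)) (apw i s))"

definition pev :: "'a::cstar_algebra \<Rightarrow> complex poly \<Rightarrow> 'a unitz" where
  "pev s p = cof (coeff p 0) + pure (aev s p)"

lemma aev_bound: "degree p \<le> n \<Longrightarrow> aev s p = (\<Sum>i<n. scaleC (coeff p (Suc i)) (apw i s))"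
  unfolding aev_def
  by (rule sum.mono_neutral_left) (auto simp: coeff_eq_0)

lemma aev_add: "aev s (p + q) = aev s p + aev s q"
proof -
  define n where "n = degree p + degree q"
  have "aev s (p + q) = (\<Sum>i<n. scaleC (coeff (p + q) (Suc i)) (apw i s))"
    by (rule aev_bound) (simp add: n_def degree_add_le)
  also have "\<dots> = (\<Sum>i<n. scaleC (coeff p (Suc i)) (apw i s)) + (\<Sum>i<n. scaleC (coeff q (Suc i)) (apw i s))"
    by (simp add: scaleC_add_left sum.distrib)
  also have "\<dots> = aev s p + aev s q"
    using aev_bound[of p n s] aev_bound[of q n s] by (simp add: n_def)
  finally show ?thesis .
qed

lemma aev_smult: "aev s (smult c p) = scaleC c (aev s p)"
proof -
  have "aev s (smult c p) = (\<Sum>i<degree p. scaleC (coeff (smult c p) (Suc i)) (apw i s))"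
    by (rule aev_bound) simp
  also have "\<dots> = scaleC c (aev s p)"
    by (simp add: aev_def scaleC_sum scaleC_scaleC)
  finally show ?thesis .
qed

lemma aev_pCons: "aev s (pCons a p) = scaleC (coeff p 0) s + s * aev s p"
proof -
  have "aev s (pCons a p) = (\<Sum>i<Suc (degree p). scaleC (coeff (pCons a p) (Suc i)) (apw i s))"
    by (rule aev_bound) (simp add: degree_pCons_le)
  also have "\<dots> = (\<Sum>i<Suc (degree p). scaleC (coeff p i) (apw i s))" by simp
  also have "\<dots> = scaleC (coeff p 0) s + (\<Sum>i<degree p. scaleC (coeff p (Suc i)) (apw (Suc i) s))"
    by (simp only: sum.lessThan_Suc_shift apw.simps(1))
  also have "(\<Sum>i<degree p. scaleC (coeff p (Suc i)) (apw (Suc i) s)) = s * aev s p"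
    by (simp add: aev_def sum_distrib_left scaleC_mult_right)
  finally show ?thesis .
qed

lemma pev_pCons: "pev s (pCons a p) = cof a + pure s * pev s p"
  by (simp add: pev_def aev_pCons pure_add pure_mult distrib_left pure_cof add.assoc)

lemma pev_add: "pev s (p + q) = pev s p + pev s q"
  by (simp add: pev_def aev_add cof_add pure_add algebra_simps)

lemma pev_smult: "pev s (smult c p) = cof c * pev s p"
  by (simp add: pev_def aev_smult cof_mult distrib_left cof_pure)

lemma pev_0[simp]: "pev s 0 = 0"
  by (simp add: pev_def aev_def)

lemma pev_mult: "pev s (p * q) = pev s p * pev s q"
proof (induction p rule: pCons_induct)
  case (pCons a p)
  have "pev s (pCons a p * q) = pev s (smult a q + pCons 0 (p * q))" by simp
  also have "\<dots> = cof a * pev s q + pure s * (pev s p * pev s q)"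
    by (simp add: pev_add pev_smult pev_pCons pCons.IH)
  also have "\<dots> = pev s (pCons a p) * pev s q"
    by (simp add: pev_pCons distrib_right mult.assoc)
  finally show ?case .
qed simp

lemma pev_linear: "pev s [:- z, 1:] = pure s - cof z"
  by (simp add: pev_pCons pev_def aev_def cof_minus scaleC_one)

lemma pev_const_diff: "coeff p 0 = 0 \<Longrightarrow> pev s (p - [:l:]) = pure (aev s p) - cof l"
proof -
  assume "coeff p 0 = 0"
  have "p - [:l:] = p + smult (-1) [:l:]"
    by (simp only: smult_minus_left smult_1_left diff_conv_add_uminus)
  then have "pev s (p - [:l:]) = pev s (p + smult (-1) [:l:])" by (rule arg_cong)
  also have "\<dots> = pev s p + cof (-1) * pev s [:l:]" by (simp only: pev_add pev_smult)
  also have "pev s [:l:] = cof l" by (simp add: pev_def aev_def)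
  finally show ?thesis using \<open>coeff p 0 = 0\<close> by (simp add: pev_def cof_minus)
qed

lemma uinv_pev:
  fixes s :: "'a::cstar_algebra"
  assumes pos: "positive s" and R0: "norm s \<le> R0" and q: "q \<noteq> 0"
    and nz: "\<And>t. 0 \<le> t \<Longrightarrow> t \<le> R0 \<Longrightarrow> poly q (complex_of_real t) \<noteq> 0"
  shows "uinv (pev s q)"
proof -
  have lin: "uinv (pure s - cof z)" if z: "poly q z = 0" for z
  proof (cases "z \<in> complex_of_real ` {0..}")
    case True
    then obtain t where t: "z = complex_of_real t" "0 \<le> t" by auto
    then have "R0 < t" using nz[of t] z by force
    then have "norm s < cmod z" using R0 t by simp
    then show ?thesis by (rule neumann)
  next
    case False
    then have "z \<notin> cspectrum s" using pos unfolding cstar_algebra_class.positive_def by blast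
    then show ?thesis by (rule not_spec_uinv)
  qed
  have prodM: "uinv (pev s (\<Prod>x\<in>#M. [:-x, 1:]))" if "\<forall>x\<in>#M. poly q x = 0" for M
    using that
  proof (induction M)
    case empty then show ?case by (simp add: pev_def aev_def uinv_one)
  next
    case (add x M)
    have e: "(\<Prod>y\<in>#add_mset x M. [:-y, 1:]) = [:-x, 1:] * (\<Prod>y\<in>#M. [:-y, 1:])" by simp
    have "uinv (pure s - cof x)" using add.prems by (intro lin) simp
    moreover have "uinv (pev s (\<Prod>y\<in>#M. [:-y, 1:]))" using add by simp
    ultimately show ?case unfolding e pev_mult pev_linear by (rule uinv_mult)
  qed
  have "pev s q = pev s (smult (lead_coeff q) (\<Prod>x\<in>#proots q. [:-x, 1:]))"
    by (simp add: complex_poly_decompose_multiset)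
  also have "\<dots> = cof (lead_coeff q) * pev s (\<Prod>x\<in>#proots q. [:-x, 1:])"
    by (rule pev_smult)
  finally show ?thesis
    using uinv_mult[OF uinv_cof prodM] q by auto
qed


lemma aev_selfadj:
  fixes s :: "'a::cstar_algebra"
  assumes "adj s = s" "\<And>i. cnj (coeff p i) = coeff p i"
  shows "adj (aev s p) = aev s p"
  by (simp add: aev_def adj_sum adj_scaleC assms apw_adj)

lemma norm_aev_bound:
  fixes s :: "'a::cstar_algebra"
  assumes pos: "positive s" and R0: "norm s \<le> R0"
    and re: "\<And>i. cnj (coeff p i) = coeff p i" and p0: "coeff p 0 = 0"
    and bnd: "\<And>t. 0 \<le> t \<Longrightarrow> t \<le> R0 \<Longrightarrow> cmod (poly p (complex_of_real t)) \<le> eps"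
  shows "norm (aev s p) \<le> eps"
proof -
  have sa: "adj s = s" using pos by (simp add: cstar_algebra_class.positive_def)
  have "0 \<le> R0" using R0 norm_ge_zero[of s] by linarith
  then have eps0: "0 \<le> eps" using bnd[of 0] by (meson norm_ge_zero order_trans order_refl)
  have key: "norm (aev s p) \<le> rho" if rho: "eps < rho" for rho
  proof (rule gelfand[OF aev_selfadj[OF sa re]])
    show "0 < rho" using rho eps0 by linarith
    fix l assume l: "rho \<le> cmod l"
    have l0: "l \<noteq> 0" using l rho eps0 by auto
    have "uinv (pev s (p - [:l:]))"
    proof (rule uinv_pev[OF pos R0])
      show "p - [:l:] \<noteq> 0"
      proof
        assume "p - [:l:] = 0"
        then have "coeff (p - [:l:]) 0 = 0" by simp
        then show False using p0 l0 by simp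
      qed
      fix t :: real assume t: "0 \<le> t" "t \<le> R0"
      show "poly (p - [:l:]) (complex_of_real t) \<noteq> 0"
      proof
        assume "poly (p - [:l:]) (complex_of_real t) = 0"
        then have "poly p (complex_of_real t) = l" by simp
        then show False using bnd[OF t] l rho by simp
      qed
    qed
    then show "uinv (pure (aev s p) - cof l)" by (simp add: pev_const_diff[OF p0])
  qed
  show ?thesis
  proof (rule ccontr)
    assume "\<not> norm (aev s p) \<le> eps"
    then have "eps < (norm (aev s p) + eps) / 2" by simp
    from key[OF this] show False using \<open>\<not> norm (aev s p) \<le> eps\<close> by simp
  qed
qed



lemma sqrt_approx_poly:
  assumes e: "0 < e" and R: "0 \<le> R"
  obtains b :: "nat \<Rightarrow> real" and n where
    "\<And>t. 0 \<le> t \<Longrightarrow> t \<le> R \<Longrightarrow> \<bar>(\<Sum>i\<in>{1..n}. b i * (t^2)^i) - t\<bar> \<le> e"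
proof -
  have "continuous_on {0..R^2} sqrt" by (intro continuous_intros)
  then obtain g where g: "real_polynomial_function g" "\<And>x. x \<in> {0..R^2} \<Longrightarrow> \<bar>sqrt x - g x\<bar> < e/2"
    using Stone_Weierstrass_real_polynomial_function[of "{0..R^2}" sqrt "e/2"] e by auto
  obtain b n where gb: "g = (\<lambda>x. \<Sum>i\<le>n. b i * x ^ i)"
    using g(1) unfolding real_polynomial_function_iff_sum by blast
  have g0: "g 0 = b 0" by (simp add: gb zero_power)
  have split: "g x = b 0 + (\<Sum>i\<in>{1..n}. b i * x ^ i)" for x
  proof -
    have "{..n} = insert 0 {1..n}" by auto
    then show ?thesis by (simp add: gb)
  qed
  show ?thesis
  proof (rule that[of b n])
    fix t :: real assume t: "0 \<le> t" "t \<le> R"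
    have t2: "t^2 \<in> {0..R^2}" using t by (simp add: power_mono)
    have "\<bar>sqrt (t^2) - g (t^2)\<bar> < e/2" by (rule g(2)[OF t2])
    moreover have "\<bar>sqrt 0 - g 0\<bar> < e/2" by (rule g(2)) (use R in simp)
    moreover have "sqrt (t^2) = t" using t by simp
    ultimately show "\<bar>(\<Sum>i\<in>{1..n}. b i * (t^2)^i) - t\<bar> \<le> e"
      using split[of "t^2"] g0 by (simp add: abs_less_iff abs_le_iff; linarith)
  qed
qed


lemma comm_apw_odd:
  fixes a s :: "'a::cstar_algebra"
  assumes c2: "a * (s * s) = (s * s) * a"
  shows "a * apw (2 * k + 1) s = apw (2 * k + 1) s * a"
proof (induction k)
  case 0 then show ?case using c2 by (simp add: mult.assoc)
next
  case (Suc k)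
  have n: "2 * Suc k + 1 = Suc (Suc (2 * k + 1))" by simp
  have e: "apw (2 * Suc k + 1) s = (s * s) * apw (2 * k + 1) s"
    by (simp only: n apw.simps mult.assoc)
  have "a * ((s * s) * apw (2 * k + 1) s) = (a * (s * s)) * apw (2 * k + 1) s" by (simp only: mult.assoc)
  also have "\<dots> = ((s * s) * a) * apw (2 * k + 1) s" by (simp only: c2)
  also have "\<dots> = (s * s) * (a * apw (2 * k + 1) s)" by (simp only: mult.assoc)
  also have "\<dots> = (s * s) * (apw (2 * k + 1) s * a)" by (simp only: Suc)
  also have "\<dots> = ((s * s) * apw (2 * k + 1) s) * a" by (simp only: mult.assoc)
  finally show ?case unfolding e .
qed

lemma key_commute:
  fixes a s :: "'a::cstar_algebra"
  assumes pos: "positive s" and ac: "a * s + s * a = 0"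
  shows "a * s = s * a"
proof -
  have c2: "a * (s * s) = (s * s) * a"
  proof -
    have as: "a * s = - (s * a)" using ac by (simp add: eq_neg_iff_add_eq_0)
    have "a * (s * s) = (a * s) * s" by (simp add: mult.assoc)
    also have "\<dots> = - (s * (a * s))" by (simp add: as mult.assoc)
    also have "\<dots> = (s * s) * a" by (simp add: as mult.assoc)
    finally show ?thesis .
  qed
  have bound: "norm (a * s - s * a) \<le> 2 * norm a * e" if e: "0 < e" for e
  proof -
    obtain b :: "nat \<Rightarrow> real" and n where
      bn: "\<And>t. 0 \<le> t \<Longrightarrow> t \<le> norm s \<Longrightarrow> \<bar>(\<Sum>i\<in>{1..n}. b i * (t^2)^i) - t\<bar> \<le> e"
      using sqrt_approx_poly[OF e, of "norm s"] by auto
    define qq :: "complex poly" where "qq = (\<Sum>i\<in>{1..n}. monom (complex_of_real (b i)) (2 * i))"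
    define q where "q = qq + smult (-1) [:0, 1:]"
    have cqq: "coeff qq m = (\<Sum>i\<in>{1..n}. if 2 * i = m then complex_of_real (b i) else 0)" for m
      by (simp add: qq_def coeff_sum)
    have cq: "coeff q m = coeff qq m - (if m = 1 then 1 else 0)" for m
      by (simp add: q_def coeff_pCons split: nat.split)
    have q0: "coeff q 0 = 0" by (simp add: cq cqq)
    have qre: "cnj (coeff q m) = coeff q m" for m
      by (simp add: cq cqq cnj_sum if_distrib cong: if_cong)
    have polyq: "poly q (complex_of_real t) = complex_of_real ((\<Sum>i\<in>{1..n}. b i * (t^2)^i) - t)" for t
      by (simp add: q_def qq_def poly_sum poly_monom power_mult)
    have hb: "norm (aev s q) \<le> e"
    proof (rule norm_aev_bound[OF pos order_refl qre q0])
      fix t assume "0 \<le> t" "t \<le> norm s"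
      moreover have "cmod (poly q (complex_of_real t)) = \<bar>(\<Sum>i\<in>{1..n}. b i * (t^2)^i) - t\<bar>"
        by (simp only: polyq norm_of_real)
      ultimately show "cmod (poly q (complex_of_real t)) \<le> e" using bn by simp
    qed
    have aevq: "aev s q = aev s qq - s"
    proof -
      have "aev s [:0, 1:] = s" by (simp add: aev_def scaleC_one)
      then show ?thesis unfolding q_def aev_add aev_smult by (simp add: scaleC_minus_left scaleC_one)
    qed
    have commE: "a * aev s qq = aev s qq * a"
    proof -
      have trm: "a * scaleC (coeff qq (Suc i)) (apw i s) = scaleC (coeff qq (Suc i)) (apw i s) * a" for i
      proof (cases "even i")
        case True
        then have "\<forall>j. 2 * j \<noteq> Suc i" by presburger
        then have "coeff qq (Suc i) = 0" by (simp add: cqq)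
        then show ?thesis by simp
      next
        case False
        then obtain k where "i = 2 * k + 1" by (metis oddE)
        then show ?thesis using comm_apw_odd[OF c2, of k]
          by (simp add: scaleC_mult_left scaleC_mult_right)
      qed
      show ?thesis unfolding aev_def
        by (simp add: sum_distrib_left sum_distrib_right trm)
    qed
    have "a * s - s * a = - (a * aev s q - aev s q * a)"
      using commE by (simp add: aevq algebra_simps)
    then have "norm (a * s - s * a) = norm (a * aev s q - aev s q * a)" by (simp only: norm_minus_cancel)
    also have "\<dots> \<le> norm (a * aev s q) + norm (aev s q * a)" by (rule norm_triangle_ineq4)
    also have "\<dots> \<le> norm a * norm (aev s q) + norm (aev s q) * norm a"
      by (intro add_mono norm_mult_ineq)
    also have "\<dots> \<le> norm a * e + e * norm a"
      by (intro add_mono mult_left_mono mult_right_mono hb) auto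
    finally show ?thesis by (simp add: mult_ac)
  qed
  have "norm (a * s - s * a) = 0"
  proof (rule ccontr)
    assume ne: "norm (a * s - s * a) \<noteq> 0"
    then have pos0: "0 < norm (a * s - s * a)" by simp
    define e where "e = norm (a * s - s * a) / (4 * (norm a + 1))"
    have e0: "0 < e" using pos0 norm_ge_zero[of a] by (simp add: e_def add_nonneg_pos)
    have "norm (a * s - s * a) \<le> 2 * norm a * e" by (rule bound[OF e0])
    also have "\<dots> \<le> 2 * (norm a + 1) * e" using e0 by (intro mult_right_mono) auto
    also have "\<dots> = norm (a * s - s * a) / 2"
    proof -
      have k: "norm a + 1 \<noteq> 0" "4 + norm a * 4 \<noteq> 0" using norm_ge_zero[of a] by linarith+
      show ?thesis unfolding e_def using k by (simp add: field_simps)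
    qed
    finally show False using pos0 by simp
  qed
  then show ?thesis by simp
qed

lemma key_lemma:
  fixes a s :: "'a::cstar_algebra"
  assumes pos: "positive s" and ac: "a * s + s * a = 0"
  shows "a * s = 0" "s * a = 0"
proof -
  have c: "a * s = s * a" by (rule key_commute[OF pos ac])
  then have "a * s + a * s = 0" using ac by simp
  then have "scaleR 2 (a * s) = 0" by (simp add: scaleR_2)
  then show "a * s = 0" by simp
  then show "s * a = 0" using c by simp
qed



lemma closed_eq0:
  fixes f :: "'a::cstar_algebra \<Rightarrow> 'a"
  assumes "continuous_on UNIV f"
  shows "closed {a. f a = 0}"
  by (rule closed_Collect_eq[OF assms continuous_on_const])

lemma closed_Ann: "closed (Ann (T :: 'a::cstar_algebra set))"
proof -
  have "Ann T = (\<Inter>s\<in>T. {a. a * s + s * a = 0})"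
    by (auto simp: cstar_algebra_class.Ann_def)
  moreover have "closed {a. a * s + s * a = (0::'a)}" for s
    by (rule closed_eq0) (intro continuous_intros)
  ultimately show ?thesis by auto
qed

lemma closed_dAnn: "closed (dAnn (V :: 'a::cstar_algebra set))"
proof -
  have "dAnn V = (\<Inter>x\<in>V. \<Inter>y\<in>V. {a. x * a * y + y * a * x = 0})"
    by (auto simp: cstar_algebra_class.dAnn_def)
  moreover have "closed {a. x * a * y + y * a * x = (0::'a)}" for x y
    by (rule closed_eq0) (intro continuous_intros)
  ultimately show ?thesis by (simp add: closed_INT)
qed

lemma csub_Ann: "closed_csubspace (Ann (T :: 'a::cstar_algebra set))"
  unfolding cstar_algebra_class.closed_csubspace_def
proof (intro conjI ballI allI closed_Ann)
  show "0 \<in> Ann T" by (simp add: cstar_algebra_class.Ann_def)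
  fix x y assume "x \<in> Ann T" "y \<in> Ann T"
  then show "x + y \<in> Ann T"
    by (auto simp: cstar_algebra_class.Ann_def distrib_left distrib_right algebra_simps)
next
  fix c x assume "x \<in> Ann T"
  then show "scaleC c x \<in> Ann T"
    by (auto simp: cstar_algebra_class.Ann_def scaleC_mult_left scaleC_mult_right simp flip: scaleC_add_right)
qed

lemma csub_dAnn: "closed_csubspace (dAnn (V :: 'a::cstar_algebra set))"
  unfolding cstar_algebra_class.closed_csubspace_def
proof (intro conjI ballI allI closed_dAnn)
  show "0 \<in> dAnn V" by (simp add: cstar_algebra_class.dAnn_def)
  fix a b assume a: "a \<in> dAnn V" and b: "b \<in> dAnn V"
  show "a + b \<in> dAnn V"
    unfolding cstar_algebra_class.dAnn_def
  proof (intro CollectI ballI)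
    fix x y assume "x \<in> V" "y \<in> V"
    then have "x * a * y + y * a * x = 0" "x * b * y + y * b * x = 0"
      using a b by (auto simp: cstar_algebra_class.dAnn_def)
    then show "x * (a + b) * y + y * (a + b) * x = 0"
      by (simp add: distrib_left distrib_right) (metis add.assoc add.left_commute add_0_right)
  qed
next
  fix c a assume a: "a \<in> dAnn V"
  show "scaleC c a \<in> dAnn V"
    unfolding cstar_algebra_class.dAnn_def
  proof (intro CollectI ballI)
    fix x y assume "x \<in> V" "y \<in> V"
    then have "x * a * y + y * a * x = 0" using a by (auto simp: cstar_algebra_class.dAnn_def)
    then show "x * scaleC c a * y + y * scaleC c a * x = 0"
      by (simp add: scaleC_mult_left scaleC_mult_right flip: scaleC_add_right)
  qed
qed

lemma csub_Int: "closed_csubspace A \<Longrightarrow> closed_csubspace B \<Longrightarrow> closed_csubspace (A \<inter> (B :: 'a::cstar_algebra set))"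
  unfolding cstar_algebra_class.closed_csubspace_def by auto


lemma AnnI: "(\<And>s. s \<in> T \<Longrightarrow> a * s + s * a = 0) \<Longrightarrow> a \<in> Ann (T :: 'a::cstar_algebra set)"
  by (simp add: cstar_algebra_class.Ann_def)

lemma AnnS_zero:
  fixes S :: "'a::cstar_algebra set"
  assumes pos: "\<forall>s\<in>S. positive s" and x: "x \<in> Ann S" and s: "s \<in> S"
  shows "x * s = 0" "s * x = 0"
proof -
  have "x * s + s * x = 0" using x s by (simp add: cstar_algebra_class.Ann_def)
  then show "x * s = 0" "s * x = 0" using key_lemma pos s by blast+
qed

lemma Ann_adj:
  fixes T :: "'a::cstar_algebra set"
  assumes sa: "\<forall>s\<in>T. adj s = s" and x: "x \<in> Ann T"
  shows "adj x \<in> Ann T"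
proof (rule AnnI)
  fix s assume s: "s \<in> T"
  have "x * s + s * x = 0" using x s by (simp add: cstar_algebra_class.Ann_def)
  then have "adj (x * s + s * x) = 0" by simp
  then show "adj x * s + s * adj x = 0" using sa s by (simp add: adj_add adj_mult add.commute)
qed

lemma AnnS_props:
  fixes S :: "'a::cstar_algebra set"
  assumes pos: "\<forall>s\<in>S. positive s"
  shows "cstar_subalgebra (Ann S)" "\<forall>x\<in>Ann S. \<forall>a. x * a * x \<in> Ann S"
proof -
  have sa: "\<forall>s\<in>S. adj s = s" using pos by (simp add: cstar_algebra_class.positive_def)
  show "cstar_subalgebra (Ann S)"
    unfolding cstar_algebra_class.cstar_subalgebra_def
  proof (intro conjI ballI csub_Ann)
    fix x y assume x: "x \<in> Ann S" and y: "y \<in> Ann S"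
    show "x * y \<in> Ann S"
    proof (rule AnnI)
      fix s assume s: "s \<in> S"
      have "x * y * s + s * (x * y) = x * (y * s) + (s * x) * y" by (simp add: mult.assoc)
      then show "x * y * s + s * (x * y) = 0" using AnnS_zero[OF pos _ s] x y by simp
    qed
  next
    fix x assume "x \<in> Ann S"
    then show "adj x \<in> Ann S" by (rule Ann_adj[OF sa])
  qed
  show "\<forall>x\<in>Ann S. \<forall>a. x * a * x \<in> Ann S"
  proof (intro ballI allI)
    fix x a assume x: "x \<in> Ann S"
    show "x * a * x \<in> Ann S"
    proof (rule AnnI)
      fix s assume s: "s \<in> S"
      have "x * a * x * s + s * (x * a * x) = x * a * (x * s) + (s * x) * (a * x)" by (simp add: mult.assoc)
      then show "x * a * x * s + s * (x * a * x) = 0" using AnnS_zero[OF pos x s] by simp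
    qed
  qed
qed

lemma AnnAnn_zero:
  fixes S :: "'a::cstar_algebra set"
  assumes pos: "\<forall>s\<in>S. positive s" and y: "y \<in> Ann (Ann S)" and x: "x \<in> Ann S"
  shows "x * y = 0" "y * x = 0"
proof -
  have sub: "cstar_subalgebra (Ann S)" by (rule AnnS_props(1)[OF pos])
  then have cl: "\<And>u v. u \<in> Ann S \<Longrightarrow> v \<in> Ann S \<Longrightarrow> u * v \<in> Ann S"
    "\<And>u. u \<in> Ann S \<Longrightarrow> adj u \<in> Ann S"
    "\<And>c u. u \<in> Ann S \<Longrightarrow> scaleC c u \<in> Ann S"
    "\<And>u v. u \<in> Ann S \<Longrightarrow> v \<in> Ann S \<Longrightarrow> u + v \<in> Ann S"
    by (auto simp: cstar_algebra_class.cstar_subalgebra_def cstar_algebra_class.closed_csubspace_def)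
  have yAnn: "\<And>u. u \<in> Ann S \<Longrightarrow> y * u + u * y = 0"
    using y by (simp add: cstar_algebra_class.Ann_def)
  have sa_case: "h * y = 0 \<and> y * h = 0" if h: "h \<in> Ann S" "adj h = h" for h
  proof -
    have hh: "h * h \<in> Ann S" by (rule cl(1)[OF h(1) h(1)])
    have yh: "y * h = - (h * y)" using yAnn[OF h(1)] by (simp add: eq_neg_iff_add_eq_0)
    have "y * (h * h) = (y * h) * h" by (simp add: mult.assoc)
    also have "\<dots> = - (h * (y * h))" by (simp add: yh mult.assoc)
    also have "\<dots> = h * h * y" by (simp add: yh mult.assoc)
    finally have "y * (h * h) = h * h * y" .
    with yAnn[OF hh] have "h * h * y + h * h * y = 0" by simp
    then have "scaleR 2 (h * h * y) = 0" by (simp add: scaleR_2)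
    then have hhy: "h * h * y = 0" by simp
    have "adj (h * y) * (h * y) = adj y * (h * h * y)"
      by (simp add: adj_mult h(2) mult.assoc)
    also have "\<dots> = 0" by (simp add: hhy)
    finally have "norm (h * y) ^ 2 = 0" using cstar_identity[of "h * y"] by simp
    then have "h * y = 0" by simp
    then show ?thesis using yh by simp
  qed
  define h where "h = scaleC (1/2) (x + adj x)"
  define k where "k = scaleC (- \<i> / 2) (x - adj x)"
  have hA: "h \<in> Ann S" unfolding h_def by (intro cl x)
  have kA: "k \<in> Ann S" unfolding k_def diff_conv_add_uminus
    by (intro cl x) (metis cl(3) scaleC_minus_left scaleC_one x cl(2))
  have hs: "adj h = h" by (simp add: h_def adj_scaleC adj_add adj_adj add.commute)
  have ks: "adj k = k"
  proof -
    have "adj k = scaleC (\<i> / 2) (adj x - x)" by (simp add: k_def adj_scaleC adj_diff adj_adj)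
    also have "\<dots> = scaleC (- \<i> / 2) (x - adj x)"
      by (metis minus_diff_eq scaleC_minus_left scaleC_minus_right minus_divide_left minus_minus)
    finally show ?thesis by (simp add: k_def)
  qed
  have xhk: "x = h + scaleC \<i> k"
  proof -
    have "scaleC \<i> k = scaleC (1/2) (x - adj x)" by (simp add: k_def scaleC_scaleC)
    then have "h + scaleC \<i> k = scaleC (1/2) (x + adj x) + scaleC (1/2) (x - adj x)" by (simp add: h_def)
    also have "\<dots> = scaleC (1/2) (x + x)" by (simp flip: scaleC_add_right)
    also have "\<dots> = scaleC (1/2 + 1/2) x" by (simp only: scaleC_add_left scaleC_add_right)
    finally show ?thesis by (simp add: scaleC_one)
  qed
  show "x * y = 0" using sa_case[OF hA hs] sa_case[OF kA ks]
    by (simp add: xhk distrib_right scaleC_mult_left)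
  show "y * x = 0" using sa_case[OF hA hs] sa_case[OF kA ks]
    by (simp add: xhk distrib_left scaleC_mult_right)
qed

lemma AnnAnn_props:
  fixes S :: "'a::cstar_algebra set"
  assumes pos: "\<forall>s\<in>S. positive s"
  shows "cstar_subalgebra (Ann (Ann S))" "\<forall>y\<in>Ann (Ann S). \<forall>a. y * a * y \<in> Ann (Ann S)"
proof -
  have clS: "\<And>u. u \<in> Ann S \<Longrightarrow> adj u \<in> Ann S"
    using AnnS_props(1)[OF pos] by (auto simp: cstar_algebra_class.cstar_subalgebra_def)
  show "cstar_subalgebra (Ann (Ann S))"
    unfolding cstar_algebra_class.cstar_subalgebra_def
  proof (intro conjI ballI csub_Ann)
    fix x y assume x: "x \<in> Ann (Ann S)" and y: "y \<in> Ann (Ann S)"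
    show "x * y \<in> Ann (Ann S)"
    proof (rule AnnI)
      fix s assume s: "s \<in> Ann S"
      have "x * y * s + s * (x * y) = x * (y * s) + (s * x) * y" by (simp add: mult.assoc)
      then show "x * y * s + s * (x * y) = 0" using AnnAnn_zero[OF pos _ s] x y by simp
    qed
  next
    fix y assume y: "y \<in> Ann (Ann S)"
    show "adj y \<in> Ann (Ann S)"
    proof (rule AnnI)
      fix s assume s: "s \<in> Ann S"
      have "adj y * s + s * adj y = adj (adj s * y) + adj (y * adj s)"
        by (simp add: adj_mult adj_adj)
      then show "adj y * s + s * adj y = 0" using AnnAnn_zero[OF pos y clS[OF s]] by simp
    qed
  qed
  show "\<forall>y\<in>Ann (Ann S). \<forall>a. y * a * y \<in> Ann (Ann S)"
  proof (intro ballI allI)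
    fix y a assume y: "y \<in> Ann (Ann S)"
    show "y * a * y \<in> Ann (Ann S)"
    proof (rule AnnI)
      fix s assume s: "s \<in> Ann S"
      have "y * a * y * s + s * (y * a * y) = y * a * (y * s) + (s * y) * (a * y)" by (simp add: mult.assoc)
      then show "y * a * y * s + s * (y * a * y) = 0" using AnnAnn_zero[OF pos y s] by simp
    qed
  qed
qed

theorem lemma2:
  fixes S :: "'a::cstar_algebra set"
  assumes "\<forall>s\<in>S. positive s"
  shows "cstar_subalgebra (Ann S) \<and> cstar_subalgebra (Ann (Ann S)) \<and>
    (\<forall>x\<in>Ann S. \<forall>a. x * a * x \<in> Ann S) \<and>
    (\<forall>y\<in>Ann (Ann S). \<forall>a. y * a * y \<in> Ann (Ann S)) \<and>
    closed_csubspace (dAnn (Ann (Ann S)) \<inter> dAnn (Ann S))"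
  using AnnS_props[OF assms] AnnAnn_props[OF assms] csub_Int[OF csub_dAnn csub_dAnn] by blast


end
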